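(* Let $n\ge3$, $i\ge0$, $1\le k\le n$, and suppose $\mathcal{L}_i\cap\mathcal{B}_k\neq\emptyset$. Then $\mathcal{L}_i\cap\mathcal{B}_k$ contains at most one element of the form $x_1^t\partial_k$ (with $t\ge0$ an integer). If it contains such an element, then this element is the unique element of minimum weight-degree $\mathrm{WD}$ in $\mathcal{L}_i\cap\mathcal{B}_k$, and its exponent is $t=i-h_i(n-k)+1$.
   Context: Fix an integer $n\ge 3$. A partition is a sequence $\Lambda=(\lambda_j)_{j\ge1}$ of non-negative integers with finite support; $\mathrm{wt}(\Lambda)=\sum_j j\lambda_j$; $\mathrm{Part}(k)$ is the set of partitions with $\lambda_j=0$ for $j>k$. Write $x^\Lambda=\prod_j x_j^{\lambda_j}$, $\deg(x^\Lambda)=\sum_j\lambda_j$. $\mathcal{B}=\{x^\Lambda\partial_k : 1\le k\le n,\ \Lambda\in\mathrm{Part}(k-1)\}$ and $\mathcal{B}_u=\{x^\Lambda\partial_k\in\mathcal{B}: k=u\}$. For an integer $i\ge-1$, let $r_i\in\{1,\dots,n-1\}$ with $i\equiv r_i\pmod{n-1}$ and $h_i=\lfloor (i-1)/(n-1)\rfloor+1$. The weight-degree is $\mathrm{WD}(x^\Lambda\partial_k)=\mathrm{wt}(\Lambda)-\deg(x^\Lambda)+n-k$, and $\mathrm{lev}_i(x^\Lambda\partial_k)=h_i\,\mathrm{WD}(x^\Lambda\partial_k)+\deg(x^\Lambda)-1$. For $i\ge-1$, $\mathcal{N}_i=\{b\in\mathcal{B}: \mathrm{lev}_j(b)\le j\text{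 for some integer } -1\le j\le i\}$, and $\mathcal{L}_i=\mathcal{N}_i\setminus\mathcal{N}_{i-1}$ for $i\ge0$. *)

theory Defs
  imports Main
begin

text \<open>A partition is a finitely supported function nat => nat; index 0 is unused
  and required to be 0. A basis element x^Lambda d_k is the pair (Lambda, k).\<close>

type_synonym partition = "nat \<Rightarrow> nat"

definition Part :: "nat \<Rightarrow> partition set" where
  "Part m = {L. \<forall>j. (j = 0 \<or> m < j) \<longrightarrow> L j = 0}"

definition wt :: "partition \<Rightarrow> nat" where
  "wt L = (\<Sum>j\<in>{j. L j \<noteq> 0}. j * L j)"

definition pdeg :: "partition \<Rightarrow> nat" where
  "pdeg L = (\<Sum>j\<in>{j. L j \<noteq> 0}. L j)"

definition Bas :: "nat \<Rightarrow> (partition \<times> nat) set" where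
  "Bas n = {(L, k). 1 \<le> k \<and> k \<le> n \<and> L \<in> Part (k - 1)}"

definition Bas_u :: "nat \<Rightarrow> nat \<Rightarrow> (partition \<times> nat) set" where
  "Bas_u n u = {b \<in> Bas n. snd b = u}"

definition hh :: "nat \<Rightarrow> int \<Rightarrow> int" where
  "hh n i = (i - 1) div (int n - 1) + 1"

definition WD :: "nat \<Rightarrow> partition \<times> nat \<Rightarrow> int" where
  "WD n b = int (wt (fst b)) - int (pdeg (fst b)) + int n - int (snd b)"

definition lev :: "nat \<Rightarrow> int \<Rightarrow> partition \<times> nat \<Rightarrow> int" where
  "lev n i b = hh n i * WD n b + int (pdeg (fst b)) - 1"

definition NN :: "nat \<Rightarrow> int \<Rightarrow> (partition \<times> nat) set" where
  "NN n i = {b \<in> Bas n. \<exists>j. -1 \<le> j \<and> j \<le> i \<and> lev n j b \<le> j}"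

definition LL :: "nat \<Rightarrow> int \<Rightarrow> (partition \<times> nat) set" where
  "LL n i = NN n i - NN n (i - 1)"

definition x1pow :: "nat \<Rightarrow> partition" where
  "x1pow t = (\<lambda>j. if j = 1 then t else 0)"

end

theory Submission
  imports Defs
begin

lemma wt_x1pow: "wt (x1pow t) = t"
proof (cases "t = 0")
  case True
  then show ?thesis by (simp add: wt_def x1pow_def)
next
  case False
  then have "{j. x1pow t j \<noteq> 0} = {1}" by (auto simp: x1pow_def)
  then show ?thesis by (simp add: wt_def x1pow_def)
qed

lemma pdeg_x1pow: "pdeg (x1pow t) = t"
proof (cases "t = 0")
  case True
  then show ?thesis by (simp add: pdeg_def x1pow_def)
next
  case False
  then have "{j. x1pow t j \<noteq> 0} = {1}" by (auto simp: x1pow_def)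
  then show ?thesis by (simp add: pdeg_def x1pow_def)
qed

lemma hh_mono:
  assumes "n \<ge> 3" "a \<le> b"
  shows "hh n a \<le> hh n b"
proof -
  have "(a - 1) div (int n - 1) \<le> (b - 1) div (int n - 1)"
    using assms by (intro zdiv_mono1) auto
  then show ?thesis by (simp add: hh_def)
qed

lemma LL_x1pow:
  assumes n: "n \<ge> 3" and i: "i \<ge> 0" and k: "1 \<le> k" "k \<le> n"
    and mem: "(x1pow t, k) \<in> LL n i"
  shows "int t = i - hh n i * (int n - int k) + 1"
proof -
  let ?b = "(x1pow t, k)"
  have lv: "lev n j ?b = hh n j * (int n - int k) + int t - 1" for j
    by (simp add: lev_def WD_def wt_x1pow pdeg_x1pow)
  from mem have inN: "?b \<in> NN n i" and notN: "?b \<notin> NN n (i - 1)"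
    by (auto simp: LL_def)
  from inN obtain j0 where j0: "-1 \<le> j0" "j0 \<le> i" "lev n j0 ?b \<le> j0" and bB: "?b \<in> Bas n"
    by (auto simp: NN_def)
  have A: "\<forall>j. -1 \<le> j \<and> j \<le> i - 1 \<longrightarrow> lev n j ?b > j"
  proof (intro allI impI)
    fix j assume "-1 \<le> j \<and> j \<le> i - 1"
    then show "lev n j ?b > j" using notN bB unfolding NN_def by (metis (mono_tags, lifting) mem_Collect_eq not_le)
  qed
  have "j0 = i"
  proof (rule ccontr)
    assume "j0 \<noteq> i"
    then have "j0 \<le> i - 1" using j0 by linarith
    then have "lev n j0 ?b > j0" using A j0 by blast
    with j0 show False by linarith
  qed
  with j0 have h1: "hh n i * (int n - int k) + int t - 1 \<le> i" by (simp add: lv)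
  have h2: "hh n (i - 1) * (int n - int k) + int t - 1 > i - 1"
    using A i by (simp add: lv)
  have "hh n (i - 1) \<le> hh n i" using n by (intro hh_mono) auto
  then have "hh n (i - 1) * (int n - int k) \<le> hh n i * (int n - int k)"
    using k by (intro mult_right_mono) auto
  then show ?thesis using h1 h2 by linarith
qed

lemma wt_ge_pdeg:
  assumes "L \<in> Part m" "L \<noteq> x1pow (L 1)"
  shows "wt L > pdeg L"
proof -
  let ?S = "{j. L j \<noteq> 0}"
  have S: "?S \<subseteq> {1..m}" proof
    fix x assume "x \<in> {j. L j \<noteq> 0}"
    then have "L x \<noteq> 0" by simp
    moreover have "\<forall>j. (j = 0 \<or> m < j) \<longrightarrow> L j = 0" using assms(1) by (simp add: Part_def)
    ultimately have "\<not> (x = 0 \<or> m < x)" by metis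
    then show "x \<in> {1..m}" by auto
  qed
  then have fin: "finite ?S" by (rule finite_subset) auto
  have "\<exists>j. L j \<noteq> x1pow (L 1) j"
  proof (rule ccontr)
    assume "\<not> (\<exists>j. L j \<noteq> x1pow (L 1) j)"
    then have "L = x1pow (L 1)" by (intro ext) blast
    then show False using assms(2) by blast
  qed
  then obtain j where j: "L j \<noteq> x1pow (L 1) j" by blast
  have "L 0 = 0" using assms(1) by (simp add: Part_def)
  then have j0: "j \<noteq> 0" using j by (cases "j = 0") (auto simp: x1pow_def)
  have j1: "j \<noteq> 1" using j by (auto simp: x1pow_def)
  then have Lj: "L j \<noteq> 0" using j by (auto simp: x1pow_def)
  have "(\<Sum>x\<in>?S. L x) < (\<Sum>x\<in>?S. x * L x)"
  proof (rule sum_strict_mono_ex1[OF fin])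
    show "\<forall>x\<in>?S. L x \<le> x * L x"
    proof
      fix x assume "x \<in> ?S"
      then have "x \<ge> 1" using S by auto
      then show "L x \<le> x * L x" by simp
    qed
    show "\<exists>x\<in>?S. L x < x * L x"
    proof (rule bexI[of _ j])
      have "j \<ge> 2" using j0 j1 by linarith
      then have "1 * L j < j * L j" using Lj by (intro mult_strict_right_mono) auto
      then show "L j < j * L j" by simp
      show "j \<in> ?S" using Lj by simp
    qed
  qed
  then show ?thesis by (simp add: wt_def pdeg_def)
qed

theorem proposition2p14:
  fixes n k :: nat and i :: int
  assumes "n \<ge> 3" and "i \<ge> 0" and "1 \<le> k" and "k \<le> n"
    and "LL n i \<inter> Bas_u n k \<noteq> {}"
  shows "(\<forall>t1 t2. (x1pow t1, k) \<in> LL n i \<inter> Bas_u n k \<and> (x1pow t2, k) \<in> LL n i \<inter> Bas_u n k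
            \<longrightarrow> t1 = t2)
       \<and> (\<forall>t. (x1pow t, k) \<in> LL n i \<inter> Bas_u n k \<longrightarrow>
            (\<forall>b \<in> LL n i \<inter> Bas_u n k. b \<noteq> (x1pow t, k) \<longrightarrow> WD n (x1pow t, k) < WD n b)
            \<and> int t = i - hh n i * (int n - int k) + 1)"
proof -
  have T: "int t = i - hh n i * (int n - int k) + 1" if "(x1pow t, k) \<in> LL n i" for t
    using LL_x1pow[OF assms(1-4) that] .
  have U: "t1 = t2" if "(x1pow t1, k) \<in> LL n i" "(x1pow t2, k) \<in> LL n i" for t1 t2
    using T[OF that(1)] T[OF that(2)] by simp
  show ?thesis
  proof (intro conjI allI impI ballI)
    fix t1 t2
    assume "(x1pow t1, k) \<in> LL n i \<inter> Bas_u n k \<and> (x1pow t2, k) \<in> LL n i \<inter> Bas_u n k"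
    then show "t1 = t2" using U by auto
  next
    fix t assume "(x1pow t, k) \<in> LL n i \<inter> Bas_u n k"
    then show "int t = i - hh n i * (int n - int k) + 1" using T by auto
  next
    fix t b
    assume t: "(x1pow t, k) \<in> LL n i \<inter> Bas_u n k"
      and b: "b \<in> LL n i \<inter> Bas_u n k" and ne: "b \<noteq> (x1pow t, k)"
    obtain L where bL: "b = (L, k)" using b by (cases b) (auto simp: Bas_u_def)
    have LP: "L \<in> Part (k - 1)" using b bL by (auto simp: Bas_u_def Bas_def)
    have "L \<noteq> x1pow (L 1)"
    proof
      assume eq: "L = x1pow (L 1)"
      have "(L, k) \<in> LL n i" using b bL by simp
      then have "(x1pow (L 1), k) \<in> LL n i" by (subst eq[symmetric])
      then have "L 1 = t" using U t by blast
      then have "L = x1pow t" using eq by metis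
      then show False using ne bL by blast
    qed
    then have "wt L > pdeg L" using wt_ge_pdeg LP by blast
    then show "WD n (x1pow t, k) < WD n b"
      by (simp add: bL WD_def wt_x1pow pdeg_x1pow)
  qed
qed

end
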